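(* Let $p,m,n\ge 1$ be integers, let $a_1,\dots,a_n\in\mathbb{C}$ be distinct, let $m_1,\dots,m_n\ge 1$ be integers, and let $C_0,\dots,C_{m-1}$ and $B_k^{(j)}$ ($1\le j\le n$, $1\le k\le m_j$) be complex $p\times p$ matrices. Consider the $p\times p$ rational matrix $$R(\lambda)=I\lambda^m-C_{m-1}\lambda^{m-1}-\cdots-C_1\lambda-C_0+\sum_{j=1}^{n}\sum_{k=1}^{m_j}\frac{B_k^{(j)}}{(\lambda-a_j)^k},$$ and let $\mathcal{C}_R$ be its associated block matrix (defined in the context). Then every eigenvalue of $R(\lambda)$ is an eigenvalue of $\mathcal{C}_R$.
   Context: A scalar $\lambda_0\in\mathbb{C}$ with $\lambda_0\notin\{a_1,\dots,a_n\}$ is an eigenvalue of $R(\lambda)$ if there is a nonzero $v\in\mathbb{C}^p$ with $R(\lambda_0)v=0$. Let $N=m+\sum_{j=1}^n \frac{m_j(m_j+1)}{2}$. The associated block matrix is the $pN\times pN$ matrix $$\mathcal{C}_R=\begin{bmatrix}\mathcal{A}_n&0&\cdots&0&-\mathcal{F}_n\\ 0&\mathcal{A}_{n-1}&\cdots&0&-\mathcal{F}_{n-1}\\ \vdots&&\ddots&&\vdots\\ 0&0&\cdots&\mathcal{A}_1&-\mathcal{F}_1\\ \mathcal{B}_n&\mathcal{B}_{n-1}&\cdots&\mathcal{B}_1&\mathcal{B}_0\end{bmatrix},$$ where, for $1\le j\le n$: $\mathcal{A}_j=\mathrm{diag}(\mathbf{A}^{(j)}_{m_j},\mathbf{A}^{(j)}_{m_j-1},\dots,\mathbf{A}^{(j)}_1)$,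 and $\mathbf{A}^{(j)}_k$ ($1\le k\le m_j$) is the $pk\times pk$ block matrix with $a_jI$ in each diagonal block, $I$ in each block of the block superdiagonal, and $0$ elsewhere; $\mathcal{F}_j$ is the block column $\begin{bmatrix}\mathbf{F}_{m_j}\\ \vdots\\ \mathbf{F}_1\end{bmatrix}$, where $\mathbf{F}_k$ is the $pk\times pm$ matrix, partitioned into $p\times p$ blocks, whose only nonzero block is $I$ in block position $(k,1)$ (last block row, first block column); $\mathcal{B}_j=\begin{bmatrix}\mathbf{B}^{(j)}_{m_j}&\mathbf{B}^{(j)}_{m_j-1}&\cdots&\mathbf{B}^{(j)}_1\end{bmatrix}$, where $\mathbf{B}^{(j)}_k$ is the $pm\times pk$ matrix, partitioned into $p\times p$ blocks, whose only nonzero block is $B^{(j)}_k$ in block position $(m,1)$; and $\mathcal{B}_0$ is the $pm\times pm$ block companion matrix with $I$ in each block of the block superdiagonal, last block row $\begin{bmatrix}C_0&C_1&\cdots&C_{m-1}\end{bmatrix}$, and $0$ elsewhere. *)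

theory Defs
  imports Complex_Main "Jordan_Normal_Form.Char_Poly"
begin

(* Indices: j ranges over {1..n}, k over {1..mj j}; C i for i < m; B j k is B^{(j)}_k. *)

definition grp_size :: "(nat \<Rightarrow> nat) \<Rightarrow> nat \<Rightarrow> nat" where
  "grp_size mj j = mj j * (mj j + 1) div 2"

(* number of p x p block rows/columns occupied by the A-part: sum_j m_j(m_j+1)/2 *)
definition A_blocks :: "nat \<Rightarrow> (nat \<Rightarrow> nat) \<Rightarrow> nat" where
  "A_blocks n mj = (\<Sum>j=1..n. grp_size mj j)"

definition N_blocks :: "nat \<Rightarrow> nat \<Rightarrow> (nat \<Rightarrow> nat) \<Rightarrow> nat" where
  "N_blocks m n mj = m + A_blocks n mj"

(* groups appear in the order A_n, A_{n-1}, ..., A_1 *)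
definition grp_off :: "nat \<Rightarrow> (nat \<Rightarrow> nat) \<Rightarrow> nat \<Rightarrow> nat" where
  "grp_off n mj j = (\<Sum>i\<in>{j<..n}. grp_size mj i)"

(* inside group j, sub-blocks A^{(j)}_{m_j}, ..., A^{(j)}_1 *)
definition sub_off :: "(nat \<Rightarrow> nat) \<Rightarrow> nat \<Rightarrow> nat \<Rightarrow> nat" where
  "sub_off mj j k = (\<Sum>l\<in>{k<..mj j}. l)"

(* block index of the (t+1)-th block row/column (t < k) of A^{(j)}_k *)
definition bpos :: "nat \<Rightarrow> (nat \<Rightarrow> nat) \<Rightarrow> nat \<times> nat \<times> nat \<Rightarrow> nat" where
  "bpos n mj x = (case x of (j, k, t) \<Rightarrow> grp_off n mj j + sub_off mj j k + t)"

definition valid_pos :: "nat \<Rightarrow> (nat \<Rightarrow> nat) \<Rightarrow> nat \<times> nat \<times> nat \<Rightarrow> bool" where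
  "valid_pos n mj x = (case x of (j, k, t) \<Rightarrow> 1 \<le> j \<and> j \<le> n \<and> 1 \<le> k \<and> k \<le> mj j \<and> t < k)"

definition decode :: "nat \<Rightarrow> (nat \<Rightarrow> nat) \<Rightarrow> nat \<Rightarrow> nat \<times> nat \<times> nat" where
  "decode n mj b = (THE x. valid_pos n mj x \<and> bpos n mj x = b)"

definition CR_block :: "nat \<Rightarrow> nat \<Rightarrow> nat \<Rightarrow> (nat \<Rightarrow> complex) \<Rightarrow> (nat \<Rightarrow> nat)
    \<Rightarrow> (nat \<Rightarrow> complex mat) \<Rightarrow> (nat \<Rightarrow> nat \<Rightarrow> complex mat) \<Rightarrow> nat \<Rightarrow> nat \<Rightarrow> complex mat" where
  "CR_block p m n a mj C B b b' =
    (let M = A_blocks n mj in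
     if b < M \<and> b' < M then
       (case decode n mj b of (j, k, t) \<Rightarrow>
        case decode n mj b' of (j', k', t') \<Rightarrow>
          if j = j' \<and> k = k' \<and> t' = t then a j \<cdot>\<^sub>m 1\<^sub>m p
          else if j = j' \<and> k = k' \<and> t' = t + 1 then 1\<^sub>m p
          else 0\<^sub>m p p)
     else if b < M then
       (case decode n mj b of (j, k, t) \<Rightarrow>
          if t + 1 = k \<and> b' = M then - 1\<^sub>m p else 0\<^sub>m p p)
     else if b' < M then
       (case decode n mj b' of (j, k, t) \<Rightarrow>
          if b = M + (m - 1) \<and> t = 0 then B j k else 0\<^sub>m p p)
     else
       (let s = b - M; s' = b' - M in
          if s' = s + 1 then 1\<^sub>m p
          else if s = m - 1 then C s'
          else 0\<^sub>m p p))"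

definition CR :: "nat \<Rightarrow> nat \<Rightarrow> nat \<Rightarrow> (nat \<Rightarrow> complex) \<Rightarrow> (nat \<Rightarrow> nat)
    \<Rightarrow> (nat \<Rightarrow> complex mat) \<Rightarrow> (nat \<Rightarrow> nat \<Rightarrow> complex mat) \<Rightarrow> complex mat" where
  "CR p m n a mj C B =
    (let N = N_blocks m n mj in
     mat (p * N) (p * N)
       (\<lambda>(i, i'). CR_block p m n a mj C B (i div p) (i' div p) $$ (i mod p, i' mod p)))"

definition R_mat :: "nat \<Rightarrow> nat \<Rightarrow> nat \<Rightarrow> (nat \<Rightarrow> complex) \<Rightarrow> (nat \<Rightarrow> nat)
    \<Rightarrow> (nat \<Rightarrow> complex mat) \<Rightarrow> (nat \<Rightarrow> nat \<Rightarrow> complex mat) \<Rightarrow> complex \<Rightarrow> complex mat" where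
  "R_mat p m n a mj C B lam =
     mat p p (\<lambda>(r, c). (if r = c then lam ^ m else 0)
        - (\<Sum>i<m. lam ^ i * C i $$ (r, c))
        + (\<Sum>j=1..n. \<Sum>k=1..mj j. B j k $$ (r, c) / (lam - a j) ^ k))"

definition R_eigenvalue :: "nat \<Rightarrow> nat \<Rightarrow> nat \<Rightarrow> (nat \<Rightarrow> complex) \<Rightarrow> (nat \<Rightarrow> nat)
    \<Rightarrow> (nat \<Rightarrow> complex mat) \<Rightarrow> (nat \<Rightarrow> nat \<Rightarrow> complex mat) \<Rightarrow> complex \<Rightarrow> bool" where
  "R_eigenvalue p m n a mj C B lam0 =
     (lam0 \<notin> a ` {1..n} \<and>
      (\<exists>v. v \<in> carrier_vec p \<and> v \<noteq> 0\<^sub>v p \<and> R_mat p m n a mj C B lam0 *\<^sub>v v = 0\<^sub>v p))"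

end

theory Submission
  imports Defs
begin

lemma off_step:
  fixes s :: "nat \<Rightarrow> nat"
  assumes "1 \<le> i" "i \<le> hi"
  shows "sum s {i-1<..hi} = sum s {i<..hi} + s i"
proof -
  have "{i-1<..hi} = insert i {i<..hi}" using assms by auto
  thus ?thesis by simp
qed

lemma off_mono:
  fixes s :: "nat \<Rightarrow> nat"
  assumes "i \<le> i'"
  shows "sum s {i'<..hi} \<le> sum s {i<..hi}"
  by (rule sum_mono2) (use assms in auto)

lemma off_inj:
  fixes s :: "nat \<Rightarrow> nat"
  assumes "1 \<le> i" "i \<le> hi" "1 \<le> i'" "i' \<le> hi"
    "sum s {i<..hi} + u = sum s {i'<..hi} + u'" "u < s i" "u' < s i'"
  shows "i = i'"
proof (rule ccontr)
  assume "i \<noteq> i'"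
  then consider "i < i'" | "i' < i" by linarith
  thus False
  proof cases
    case 1
    have "sum s {i'<..hi} + u' < sum s {i'-1<..hi}" using off_step[of i' hi s] assms by simp
    also have "\<dots> \<le> sum s {i<..hi}" using off_mono[of i "i'-1" s hi] 1 by simp
    finally show False using assms(5) by simp
  next
    case 2
    have "sum s {i<..hi} + u < sum s {i-1<..hi}" using off_step[of i hi s] assms by simp
    also have "\<dots> \<le> sum s {i'<..hi}" using off_mono[of i' "i-1" s hi] 2 by simp
    finally show False using assms(5) by simp
  qed
qed

lemma off_surj:
  fixes s :: "nat \<Rightarrow> nat"
  assumes "b < sum s {0<..hi}"
  shows "\<exists>i. 1 \<le> i \<and> i \<le> hi \<and> sum s {i<..hi} \<le> b \<and> b < sum s {i<..hi} + s i"
proof -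
  define i where "i = (LEAST i. sum s {i<..hi} \<le> b)"
  have hi: "sum s {hi<..hi} \<le> b" by simp
  have i1: "sum s {i<..hi} \<le> b" unfolding i_def by (rule LeastI[of _ hi]) (rule hi)
  have i2: "i \<le> hi" unfolding i_def by (rule Least_le) (rule hi)
  have i0: "i \<noteq> 0" using i1 assms by (metis not_less)
  have "\<not> sum s {i-1<..hi} \<le> b" unfolding i_def
    by (rule not_less_Least) (use i0 in \<open>simp add: i_def[symmetric]\<close>)
  hence "b < sum s {i<..hi} + s i" using off_step[of i hi s] i0 i2 by simp
  thus ?thesis using i0 i1 i2 by (intro exI[of _ i]) auto
qed


lemma A_blocks_eq: "A_blocks n mj = sum (grp_size mj) {0<..n}"
  unfolding A_blocks_def by (simp add: atLeastSucAtMost_greaterThanAtMost[symmetric])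

lemma grp_size_eq: "grp_size mj j = sum (\<lambda>l. l) {0<..mj j}"
proof -
  have "sum (\<lambda>l. l) {0..mj j} = sum (\<lambda>l. l) {0<..mj j}"
    by (simp add: atLeast0AtMost[symmetric] atLeastSucAtMost_greaterThanAtMost[symmetric]
        sum.atLeast_Suc_atMost)
  thus ?thesis unfolding grp_size_def using gauss_sum_nat[of "mj j"] by simp
qed

lemma valid_bpos_lt:
  assumes "valid_pos n mj x"
  shows "bpos n mj x < A_blocks n mj"
proof -
  obtain j k t where x: "x = (j,k,t)" by (cases x) auto
  have v: "1 \<le> j" "j \<le> n" "1 \<le> k" "k \<le> mj j" "t < k" using assms x by (auto simp: valid_pos_def)
  have "sub_off mj j k + t < sub_off mj j (k-1)"
    using off_step[of k "mj j" "\<lambda>l. l"] v unfolding sub_off_def by simp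
  also have "\<dots> \<le> sub_off mj j 0" unfolding sub_off_def by (rule off_mono) simp
  also have "\<dots> = grp_size mj j" by (simp add: sub_off_def grp_size_eq)
  finally have "bpos n mj x < grp_off n mj j + grp_size mj j" by (simp add: x bpos_def)
  also have "\<dots> = grp_off n mj (j-1)" using off_step[of j n "grp_size mj"] v unfolding grp_off_def by simp
  also have "\<dots> \<le> grp_off n mj 0" unfolding grp_off_def by (rule off_mono) simp
  also have "\<dots> = A_blocks n mj" by (simp add: grp_off_def A_blocks_eq)
  finally show ?thesis .
qed

lemma sub_lt:
  assumes "1 \<le> k" "k \<le> mj j" "t < k"
  shows "sub_off mj j k + t < grp_size mj j"
proof -
  have "sub_off mj j k + t < sub_off mj j (k-1)"
    using off_step[of k "mj j" "\<lambda>l. l"] assms unfolding sub_off_def by simp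
  also have "\<dots> \<le> sub_off mj j 0" unfolding sub_off_def by (rule off_mono) simp
  also have "\<dots> = grp_size mj j" by (simp add: sub_off_def grp_size_eq)
  finally show ?thesis .
qed

lemma bpos_inj:
  assumes "valid_pos n mj x" "valid_pos n mj y" "bpos n mj x = bpos n mj y"
  shows "x = y"
proof -
  obtain j k t where x: "x = (j,k,t)" by (cases x) auto
  obtain j' k' t' where y: "y = (j',k',t')" by (cases y) auto
  have v: "1 \<le> j" "j \<le> n" "1 \<le> k" "k \<le> mj j" "t < k" using assms x by (auto simp: valid_pos_def)
  have v': "1 \<le> j'" "j' \<le> n" "1 \<le> k'" "k' \<le> mj j'" "t' < k'" using assms y by (auto simp: valid_pos_def)
  have e: "grp_off n mj j + (sub_off mj j k + t) = grp_off n mj j' + (sub_off mj j' k' + t')"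
    using assms(3) x y by (simp add: bpos_def add.assoc)
  have jj: "j = j'"
    using off_inj[OF v(1,2) v'(1,2), of "grp_size mj"] e sub_lt[of k mj j t] sub_lt[of k' mj j' t'] v v'
    unfolding grp_off_def by blast
  have e2: "sub_off mj j k + t = sub_off mj j k' + t'" using e jj by simp
  have kk: "k = k'"
    using off_inj[OF v(3,4), of k' "\<lambda>l. l"] v' jj e2 v unfolding sub_off_def by blast
  show ?thesis using x y jj kk e2 by simp
qed

lemma bpos_surj:
  assumes "b < A_blocks n mj"
  shows "\<exists>x. valid_pos n mj x \<and> bpos n mj x = b"
proof -
  obtain j where j: "1 \<le> j" "j \<le> n" "grp_off n mj j \<le> b" "b < grp_off n mj j + grp_size mj j"
    using off_surj[of b "grp_size mj" n] assms unfolding A_blocks_eq grp_off_def by blast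
  define r where "r = b - grp_off n mj j"
  have "r < sum (\<lambda>l. l) {0<..mj j}" using j r_def grp_size_eq by simp
  then obtain k where k: "1 \<le> k" "k \<le> mj j" "sub_off mj j k \<le> r" "r < sub_off mj j k + k"
    using off_surj[of r "\<lambda>l. l" "mj j"] unfolding sub_off_def by blast
  define t where "t = r - sub_off mj j k"
  have "valid_pos n mj (j,k,t)" using j k t_def by (auto simp: valid_pos_def)
  moreover have "bpos n mj (j,k,t) = b" using j k t_def r_def by (simp add: bpos_def)
  ultimately show ?thesis by blast
qed

lemma decode_bpos:
  assumes "valid_pos n mj x"
  shows "decode n mj (bpos n mj x) = x"
  unfolding decode_def using assms bpos_inj by (intro the_equality) blast+

lemma decode_valid:
  assumes "b < A_blocks n mj"
  shows "valid_pos n mj (decode n mj b) \<and> bpos n mj (decode n mj b) = b"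
  using bpos_surj[OF assms] decode_bpos by metis


lemma sum_blocks:
  fixes f :: "nat \<Rightarrow> nat \<Rightarrow> 'a::comm_monoid_add"
  assumes "0 < p"
  shows "(\<Sum>i<p*N. f (i div p) (i mod p)) = (\<Sum>b<N. \<Sum>c<p. f b c)"
proof (induction N)
  case 0 then show ?case by simp
next
  case (Suc N)
  have "{..<p * Suc N} = {..<p*N} \<union> {p*N..<p*N+p}" by auto
  hence "(\<Sum>i<p*Suc N. f (i div p) (i mod p)) = (\<Sum>i<p*N. f (i div p) (i mod p))
     + (\<Sum>i\<in>{p*N..<p*N+p}. f (i div p) (i mod p))"
    by (simp add: sum.union_disjoint ivl_disj_int)
  also have "(\<Sum>i\<in>{p*N..<p*N+p}. f (i div p) (i mod p)) = (\<Sum>c<p. f N c)"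
  proof -
    have "(\<Sum>i\<in>{p*N..<p*N+p}. f (i div p) (i mod p)) = (\<Sum>c\<in>{0..<p}. f ((c + p*N) div p) ((c+p*N) mod p))"
      using sum.shift_bounds_nat_ivl[of "\<lambda>i. f (i div p) (i mod p)" 0 "p*N" p] by (simp add: add.commute)
    also have "\<dots> = (\<Sum>c\<in>{0..<p}. f N c)"
      using assms by (intro sum.cong) auto
    finally show ?thesis by (simp add: lessThan_atLeast0)
  qed
  finally show ?case using Suc by simp
qed

lemma blk_one: "r < p \<Longrightarrow> (\<Sum>c<p. (1\<^sub>m p) $$ (r,c) * (f c :: 'a::comm_ring_1)) = f r"
  proof -
  assume r: "r < p"
  have "(\<Sum>c<p. (1\<^sub>m p) $$ (r,c) * f c) = (\<Sum>c<p. if c = r then f r else 0)"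
    using r by (intro sum.cong) auto
  also have "\<dots> = f r" using r by simp
  finally show ?thesis .
qed

lemma blk_smult: "r < p \<Longrightarrow> (\<Sum>c<p. (s \<cdot>\<^sub>m 1\<^sub>m p) $$ (r,c) * (f c :: 'a::comm_ring_1)) = s * f r"
  proof -
  assume r: "r < p"
  have "(\<Sum>c<p. (s \<cdot>\<^sub>m 1\<^sub>m p) $$ (r,c) * f c) = (\<Sum>c<p. if c = r then s * f r else 0)"
    using r by (intro sum.cong) auto
  also have "\<dots> = s * f r" using r by simp
  finally show ?thesis .
qed

lemma blk_neg: "r < p \<Longrightarrow> (\<Sum>c<p. (- 1\<^sub>m p) $$ (r,c) * (f c :: 'a::comm_ring_1)) = - f r"
  proof -
  assume r: "r < p"
  have "(\<Sum>c<p. (- 1\<^sub>m p) $$ (r,c) * f c) = (\<Sum>c<p. if c = r then - f r else 0)"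
    using r by (intro sum.cong) auto
  also have "\<dots> = - f r" using r by simp
  finally show ?thesis .
qed

lemma blk_zero: "r < p \<Longrightarrow> (\<Sum>c<p. (0\<^sub>m p p) $$ (r,c) * (f c :: 'a::comm_ring_1)) = 0"
  by simp

lemma sum_decode:
  "(\<Sum>b<A_blocks n mj. (case decode n mj b of (j,k,t) \<Rightarrow> if t = 0 then F j k else 0))
    = (\<Sum>j=1..n. \<Sum>k=1..mj j. (F j k :: 'a::comm_monoid_add))"
proof -
  define V where "V = {x. valid_pos n mj x}"
  define G where "G = (\<lambda>x. case x of (j,k,t) \<Rightarrow> if t = (0::nat) then F j k else 0)"
  have bij: "bij_betw (bpos n mj) V {..<A_blocks n mj}"
    unfolding bij_betw_def
  proof
    show "inj_on (bpos n mj) V" unfolding V_def inj_on_def using bpos_inj by blast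
    show "bpos n mj ` V = {..<A_blocks n mj}"
      unfolding V_def using valid_bpos_lt bpos_surj by fastforce
  qed
  have finV: "finite V" using bij bij_betw_finite by blast
  have "(\<Sum>b<A_blocks n mj. G (decode n mj b)) = (\<Sum>x\<in>V. G (decode n mj (bpos n mj x)))"
    using sum.reindex_bij_betw[OF bij, of "\<lambda>b. G (decode n mj b)"] by simp
  also have "\<dots> = (\<Sum>x\<in>V. G x)" using decode_bpos unfolding V_def by (intro sum.cong) auto
  also have "\<dots> = (\<Sum>x\<in>(\<lambda>(j,k). (j,k,0::nat)) ` (SIGMA j:{1..n}. {1..mj j}). G x)"
    using finV by (intro sum.mono_neutral_right) (auto simp: V_def G_def valid_pos_def image_iff)
  also have "\<dots> = (\<Sum>(j,k)\<in>(SIGMA j:{1..n}. {1..mj j}). F j k)"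
    by (subst sum.reindex) (auto simp: inj_on_def G_def intro!: sum.cong)
  also have "\<dots> = (\<Sum>j=1..n. \<Sum>k=1..mj j. F j k)" by (simp add: sum.Sigma)
  finally show ?thesis by (simp add: G_def)
qed


lemma R_row:
  assumes R: "R_mat p m n a mj C B L *\<^sub>v v = 0\<^sub>v p" and vc: "v \<in> carrier_vec p" and r: "r < p"
  shows "(\<Sum>j=1..n. \<Sum>k=1..mj j. \<Sum>c<p. B j k $$ (r,c) * (- v$c / (L - a j)^k))
       + (\<Sum>i<m. \<Sum>c<p. C i $$ (r,c) * (L^i * v$c)) = L^m * v$r"
proof -
  let ?R = "R_mat p m n a mj C B L"
  have dv: "dim_vec v = p" using vc by simp
  have "0 = (?R *\<^sub>v v) $ r" using R r by simp
  also have "\<dots> = (\<Sum>c<p. ?R $$ (r,c) * v$c)"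
    using r dv by (simp add: R_mat_def scalar_prod_def lessThan_atLeast0)
  also have "\<dots> = (\<Sum>c<p. (if r = c then L^m else 0) * v$c
        - (\<Sum>i<m. C i $$ (r,c) * (L^i * v$c))
        + (\<Sum>j=1..n. \<Sum>k=1..mj j. - (B j k $$ (r,c) * (- v$c / (L - a j)^k))))"
    using r by (intro sum.cong) (auto simp: R_mat_def algebra_simps sum_distrib_right sum_distrib_left times_divide_eq_right)
  also have "\<dots> = L^m * v$r - (\<Sum>c<p. \<Sum>i<m. C i $$ (r,c) * (L^i * v$c))
        - (\<Sum>c<p. \<Sum>j=1..n. \<Sum>k=1..mj j. B j k $$ (r,c) * (- v$c / (L - a j)^k))"
  proof -
    have "(\<Sum>c<p. (if r = c then L^m else 0) * v$c) = (\<Sum>c<p. if c = r then L^m * v$r else 0)"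
      by (intro sum.cong) auto
    also have "\<dots> = L^m * v$r" using r by simp
    finally show ?thesis by (simp add: sum.distrib sum_subtractf sum_negf)
  qed
  also have "(\<Sum>c<p. \<Sum>i<m. C i $$ (r,c) * (L^i * v$c)) = (\<Sum>i<m. \<Sum>c<p. C i $$ (r,c) * (L^i * v$c))"
    by (rule sum.swap)
  also have "(\<Sum>c<p. \<Sum>j=1..n. \<Sum>k=1..mj j. B j k $$ (r,c) * (- v$c / (L - a j)^k))
     = (\<Sum>j=1..n. \<Sum>c<p. \<Sum>k=1..mj j. B j k $$ (r,c) * (- v$c / (L - a j)^k))"
    by (rule sum.swap)
  also have "\<dots> = (\<Sum>j=1..n. \<Sum>k=1..mj j. \<Sum>c<p. B j k $$ (r,c) * (- v$c / (L - a j)^k))"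
    by (intro sum.cong refl sum.swap)
  finally show ?thesis by (simp add: algebra_simps)
qed

definition wv :: "nat \<Rightarrow> (nat \<Rightarrow> complex) \<Rightarrow> (nat \<Rightarrow> nat) \<Rightarrow> complex vec \<Rightarrow> complex \<Rightarrow> nat \<Rightarrow> nat \<Rightarrow> complex" where
  "wv n a mj v L b r = (if b < A_blocks n mj then (case decode n mj b of (j,k,t) \<Rightarrow> - v$r / (L - a j)^(k-t))
      else L^(b - A_blocks n mj) * v$r)"


lemma rowA:
  assumes b: "b < A_blocks n mj" and r: "r < p" and L: "L \<notin> a ` {1..n}" and m1: "1 \<le> m"
  shows "(\<Sum>b'<N_blocks m n mj. \<Sum>c<p. CR_block p m n a mj C B b b' $$ (r,c) * wv n a mj v L b' c)
     = L * wv n a mj v L b r"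
proof -
  define M where "M = A_blocks n mj"
  define N where "N = N_blocks m n mj"
  have NM: "N = m + M" by (simp add: N_def M_def N_blocks_def)
  let ?W = "wv n a mj v L"
  let ?K = "CR_block p m n a mj C B"
  obtain j k t where d: "decode n mj b = (j,k,t)" by (cases "decode n mj b") auto
  have vd: "valid_pos n mj (j,k,t)" "bpos n mj (j,k,t) = b" using decode_valid[OF b] d by auto
  hence jkt: "1 \<le> j" "j \<le> n" "1 \<le> k" "k \<le> mj j" "t < k" by (auto simp: valid_pos_def)
  have Lj: "L - a j \<noteq> 0" using L jkt by auto
  define b2 where "b2 = bpos n mj (j,k,t+1)"
  have b2: "t+1 < k \<Longrightarrow> b2 < M \<and> decode n mj b2 = (j,k,t+1)"
    using valid_bpos_lt[of n mj "(j,k,t+1)"] decode_bpos[of n mj "(j,k,t+1)"] jkt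
    by (auto simp: b2_def M_def valid_pos_def)
  have bb2: "t+1 < k \<Longrightarrow> b \<noteq> b2" using b2 d by auto
  have bM: "b < M" using b M_def by simp
  have pw: "(\<Sum>c<p. ?K b b' $$ (r,c) * ?W b' c) =
      (if b' = b then a j * ?W b r else 0) + (if t+1<k then (if b' = b2 then ?W b2 r else 0) else 0)
       + (if t+1 = k then (if b' = M then - ?W M r else 0) else 0)" for b'
  proof (cases "b' < M")
    case True
    obtain j' k' t' where d': "decode n mj b' = (j',k',t')" by (cases "decode n mj b'") auto
    have vd': "valid_pos n mj (j',k',t')" "bpos n mj (j',k',t') = b'"
      using decode_valid[of b' n mj] True d' by (auto simp: M_def)
    have blk: "?K b b' = (if j=j' \<and> k=k' \<and> t'=t then a j \<cdot>\<^sub>m 1\<^sub>m p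
        else if j=j' \<and> k=k' \<and> t'=t+1 then 1\<^sub>m p else 0\<^sub>m p p)"
      using b True unfolding CR_block_def Let_def d d' M_def by simp
    have nM: "b' \<noteq> M" using True by simp
    consider (c1) "b' = b" | (c2) "b' \<noteq> b" "t+1<k" "b' = b2" | (c3) "b' \<noteq> b" "\<not> (t+1<k \<and> b' = b2)"
      by blast
    then show ?thesis
    proof cases
      case c1
      hence "(j',k',t') = (j,k,t)" using d d' by simp
      hence "?K b b' = a j \<cdot>\<^sub>m 1\<^sub>m p" using blk by simp
      thus ?thesis using blk_smult[OF r, of "a j" "?W b'"] c1 bb2 nM by simp
    next
      case c2
      hence "(j',k',t') = (j,k,t+1)" using d' b2 by simp
      hence "?K b b' = 1\<^sub>m p" using blk by simp
      thus ?thesis using blk_one[OF r, of "?W b'"] c2 nM by simp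
    next
      case c3
      have n1: "\<not> (j=j' \<and> k=k' \<and> t'=t)"
      proof
        assume "j=j' \<and> k=k' \<and> t'=t"
        hence "b' = b" using vd vd' by simp
        thus False using c3 by simp
      qed
      have n2: "\<not> (j=j' \<and> k=k' \<and> t'=t+1)"
      proof
        assume h: "j=j' \<and> k=k' \<and> t'=t+1"
        hence "t+1 < k" using vd' by (simp add: valid_pos_def)
        moreover have "b' = b2" using h vd' b2_def by simp
        ultimately show False using c3 by simp
      qed
      have "?K b b' = 0\<^sub>m p p" unfolding blk by (simp only: if_not_P[OF n1] if_not_P[OF n2])
      thus ?thesis using blk_zero[OF r, of "?W b'"] c3 nM by simp
    qed
  next
    case False
    have blk: "?K b b' = (if t + 1 = k \<and> b' = M then - 1\<^sub>m p else 0\<^sub>m p p)"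
      using b False unfolding CR_block_def Let_def d M_def by simp
    have "b' \<noteq> b" using False bM by auto
    moreover have "t+1<k \<Longrightarrow> b' \<noteq> b2" using b2 False by auto
    ultimately show ?thesis using blk blk_neg[OF r, of "?W b'"] blk_zero[OF r, of "?W b'"] by auto
  qed
  have bN: "b < N" using b NM M_def by simp
  have b2N: "t+1<k \<Longrightarrow> b2 < N" using b2 NM by auto
  have MN: "M < N" using NM m1 by simp
  have "(\<Sum>b'<N. \<Sum>c<p. ?K b b' $$ (r,c) * ?W b' c) =
      a j * ?W b r + (if t+1<k then ?W b2 r else 0) + (if t+1 = k then - ?W M r else 0)"
    unfolding pw sum.distrib using bN b2N MN by simp
  also have "\<dots> = L * ?W b r"
  proof (cases "t+1<k")
    case True
    have w1: "?W b r = - v$r / (L - a j)^(k-t)" using b d by (simp add: wv_def)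
    have w2: "?W b2 r = - v$r / (L - a j)^(k-t-1)" using b2[OF True] by (simp add: wv_def M_def)
    have kt: "k - t = Suc (k-t-1)" using True by simp
    have w1': "?W b r = - v$r / ((L - a j) * (L - a j)^(k-t-1))" using w1 kt by (metis power_Suc)
    have nz: "(L - a j)^(k-t-1) \<noteq> 0" using Lj by simp
    have "- v$r / ((L - a j) * (L - a j)^(k-t-1)) * a j + - v$r / (L - a j)^(k-t-1)
       = L * (- v$r / ((L - a j) * (L - a j)^(k-t-1)))" using Lj nz by (simp add: field_simps)
    thus ?thesis using True unfolding w1' w2 by (simp add: algebra_simps)
  next
    case False
    hence kt: "k - t = 1" "t + 1 = k" using jkt by auto
    have w1: "?W b r = - v$r / (L - a j)" using b d kt by (simp add: wv_def)
    have w2: "?W M r = v$r" by (simp add: wv_def M_def)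
    show ?thesis using kt w1 w2 Lj False by (simp add: field_simps)
  qed
  finally show ?thesis unfolding N_def .
qed


lemma rowB:
  assumes b1: "A_blocks n mj \<le> b" and b2: "b < N_blocks m n mj" and r: "r < p" and m1: "1 \<le> m"
    and R: "R_mat p m n a mj C B L *\<^sub>v v = 0\<^sub>v p" and vc: "v \<in> carrier_vec p"
  shows "(\<Sum>b'<N_blocks m n mj. \<Sum>c<p. CR_block p m n a mj C B b b' $$ (r,c) * wv n a mj v L b' c)
     = L * wv n a mj v L b r"
proof -
  define M where "M = A_blocks n mj"
  define N where "N = N_blocks m n mj"
  have NM: "N = m + M" by (simp add: N_def M_def N_blocks_def)
  let ?W = "wv n a mj v L"
  let ?K = "CR_block p m n a mj C B"
  define s where "s = b - M"
  have sm: "s < m" using b1 b2 NM s_def M_def N_def by simp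
  have bs: "b = M + s" using b1 s_def M_def by simp
  define F where "F = (\<lambda>j k. \<Sum>c<p. B j k $$ (r,c) * (- v$c / (L - a j)^k))"
  have pw1: "(\<Sum>c<p. ?K b b' $$ (r,c) * ?W b' c) =
     (case decode n mj b' of (j,k,t) \<Rightarrow> if b = M + (m-1) \<and> t = 0 then F j k else 0)" if b': "b' < M" for b'
  proof -
    obtain j k t where d': "decode n mj b' = (j,k,t)" by (cases "decode n mj b'") auto
    have blk: "?K b b' = (if b = M + (m - 1) \<and> t = 0 then B j k else 0\<^sub>m p p)"
      using b1 b' unfolding CR_block_def Let_def d' M_def by simp
    have w: "?W b' c = - v$c / (L - a j)^(k-t)" for c using b' d' by (simp add: wv_def M_def)
    show ?thesis
    proof (cases "b = M + (m - 1) \<and> t = 0")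
      case True
      thus ?thesis using blk w d' by (simp add: F_def)
    next
      case False
      have K0: "?K b b' = 0\<^sub>m p p" unfolding blk by (rule if_not_P[OF False])
      show ?thesis unfolding K0 d' using False blk_zero[OF r, of "?W b'"] by auto
    qed
  qed
  have pw2: "(\<Sum>c<p. ?K b b' $$ (r,c) * ?W b' c) =
     (if b' - M = s + 1 then ?W b' r else if s = m - 1 then
        (\<Sum>c<p. C (b' - M) $$ (r,c) * (L^(b'-M) * v$c)) else 0)" if b': "M \<le> b'" for b'
  proof -
    have blk: "?K b b' = (if b' - M = s + 1 then 1\<^sub>m p else if s = m - 1 then C (b' - M) else 0\<^sub>m p p)"
      using b1 b' unfolding CR_block_def Let_def M_def s_def by simp
    have w: "?W b' c = L^(b'-M) * v$c" for c using b' by (simp add: wv_def M_def)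
    show ?thesis
    proof (cases "b' - M = s + 1")
      case True
      hence K: "?K b b' = 1\<^sub>m p" using blk by simp
      show ?thesis unfolding K using True blk_one[OF r, of "?W b'"] by simp
    next
      case F: False
      show ?thesis
      proof (cases "s = m - 1")
        case True
        hence K: "?K b b' = C (b' - M)" using blk F by simp
        show ?thesis unfolding K w using True F by simp
      next
        case False
        hence K: "?K b b' = 0\<^sub>m p p" using blk F by simp
        show ?thesis unfolding K using False F blk_zero[OF r, of "?W b'"] by simp
      qed
    qed
  qed
  have split: "(\<Sum>b'<N. \<Sum>c<p. ?K b b' $$ (r,c) * ?W b' c)
     = (\<Sum>b'<M. \<Sum>c<p. ?K b b' $$ (r,c) * ?W b' c) + (\<Sum>s'<m. \<Sum>c<p. ?K b (s'+M) $$ (r,c) * ?W (s'+M) c)"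
  proof -
    have "{..<N} = {..<M} \<union> {M..<m+M}" using NM by auto
    hence "(\<Sum>b'<N. \<Sum>c<p. ?K b b' $$ (r,c) * ?W b' c)
     = (\<Sum>b'<M. \<Sum>c<p. ?K b b' $$ (r,c) * ?W b' c) + (\<Sum>b'\<in>{M..<m+M}. \<Sum>c<p. ?K b b' $$ (r,c) * ?W b' c)"
      by (simp add: sum.union_disjoint ivl_disj_int)
    also have "(\<Sum>b'\<in>{M..<m+M}. \<Sum>c<p. ?K b b' $$ (r,c) * ?W b' c)
       = (\<Sum>s'\<in>{0..<m}. \<Sum>c<p. ?K b (s'+M) $$ (r,c) * ?W (s'+M) c)"
      using sum.shift_bounds_nat_ivl[of "\<lambda>b'. \<Sum>c<p. ?K b b' $$ (r,c) * ?W b' c" 0 M m] by simp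
    finally show ?thesis by (simp add: lessThan_atLeast0)
  qed
  show ?thesis
  proof (cases "s = m - 1")
    case False
    have bne: "b \<noteq> M + (m - 1)" using bs False by simp
    have z: "(\<Sum>b'<M. \<Sum>c<p. ?K b b' $$ (r,c) * ?W b' c) = 0"
      using bne by (intro sum.neutral) (auto simp: pw1 split: prod.splits)
    have "(\<Sum>s'<m. \<Sum>c<p. ?K b (s'+M) $$ (r,c) * ?W (s'+M) c) = (\<Sum>s'<m. if s' = s+1 then ?W (s'+M) r else 0)"
      using False by (intro sum.cong) (auto simp: pw2)
    also have "\<dots> = ?W (s+1+M) r" using False sm by simp
    also have "\<dots> = L * ?W b r" using bs by (simp add: wv_def M_def)
    finally show ?thesis unfolding N_def[symmetric] split z by simp
  next
    case True
    have beq: "b = M + (m - 1)" using bs True by simp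
    have z: "(\<Sum>b'<M. \<Sum>c<p. ?K b b' $$ (r,c) * ?W b' c)
       = (\<Sum>b'<M. case decode n mj b' of (j,k,t) \<Rightarrow> if t = 0 then F j k else 0)"
    proof (rule sum.cong[OF refl])
      fix x assume "x \<in> {..<M}"
      hence xM: "x < M" by simp
      show "(\<Sum>c<p. ?K b x $$ (r,c) * ?W x c) = (case decode n mj x of (j,k,t) \<Rightarrow> if t = 0 then F j k else 0)"
        using pw1[OF xM] by (simp only: eqTrueI[OF beq] simp_thms)
    qed
    also have "\<dots> = (\<Sum>j=1..n. \<Sum>k=1..mj j. F j k)" unfolding M_def by (rule sum_decode)
    finally have z: "(\<Sum>b'<M. \<Sum>c<p. ?K b b' $$ (r,c) * ?W b' c) = (\<Sum>j=1..n. \<Sum>k=1..mj j. F j k)" .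
    have "(\<Sum>s'<m. \<Sum>c<p. ?K b (s'+M) $$ (r,c) * ?W (s'+M) c)
       = (\<Sum>s'<m. \<Sum>c<p. C s' $$ (r,c) * (L^s' * v$c))"
    proof (rule sum.cong[OF refl])
      fix x assume "x \<in> {..<m}"
      hence "x < m" by simp
      hence ne: "x \<noteq> s + 1" using True by simp
      have "(\<Sum>c<p. ?K b (x+M) $$ (r,c) * ?W (x+M) c) = (\<Sum>c<p. C x $$ (r,c) * (L^x * v$c))"
        using pw2[of "x+M"] ne True by simp
      thus "(\<Sum>c<p. ?K b (x+M) $$ (r,c) * ?W (x+M) c) = (\<Sum>c<p. C x $$ (r,c) * (L^x * v$c))" .
    qed
    moreover have "L * ?W b r = L^m * v$r"
    proof -
      have "?W b r = L^(m-1) * v$r" using b1 beq by (simp add: wv_def M_def)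
      moreover have "L * L^(m-1) = L^m" using m1 by (cases m) auto
      ultimately show ?thesis by (simp add: mult.assoc[symmetric])
    qed
    ultimately show ?thesis unfolding N_def[symmetric] split z
      using R_row[OF R vc r] unfolding F_def by simp
  qed
qed


theorem theorem3p1:
  fixes p m n :: nat and a :: "nat \<Rightarrow> complex" and mj :: "nat \<Rightarrow> nat"
    and C :: "nat \<Rightarrow> complex mat" and B :: "nat \<Rightarrow> nat \<Rightarrow> complex mat"
    and lam0 :: complex
  assumes "p \<ge> 1" and "m \<ge> 1" and "n \<ge> 1"
    and "inj_on a {1..n}"
    and "\<forall>j\<in>{1..n}. mj j \<ge> 1"
    and "\<forall>i<m. C i \<in> carrier_mat p p"
    and "\<forall>j\<in>{1..n}. \<forall>k\<in>{1..mj j}. B j k \<in> carrier_mat p p"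
    and "R_eigenvalue p m n a mj C B lam0"
  shows "eigenvalue (CR p m n a mj C B) lam0"
proof -
  obtain v where vc: "v \<in> carrier_vec p" and vn: "v \<noteq> 0\<^sub>v p"
    and Rv: "R_mat p m n a mj C B lam0 *\<^sub>v v = 0\<^sub>v p" and L: "lam0 \<notin> a ` {1..n}"
    using assms(8) unfolding R_eigenvalue_def by blast
  have p0: "0 < p" using assms(1) by simp
  define M where "M = A_blocks n mj"
  define N where "N = N_blocks m n mj"
  have NM: "N = m + M" by (simp add: N_def M_def N_blocks_def)
  let ?W = "wv n a mj v lam0"
  let ?A = "CR p m n a mj C B"
  define x where "x = vec (p*N) (\<lambda>i. ?W (i div p) (i mod p))"
  have dimA: "dim_row ?A = p*N" "dim_col ?A = p*N" by (simp_all add: CR_def Let_def N_def)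
  have xc: "x \<in> carrier_vec (p*N)" by (simp add: x_def)
  obtain r where r: "r < p" "v $ r \<noteq> 0"
  proof -
    have "\<not> (\<forall>r<p. v $ r = 0)"
    proof
      assume "\<forall>r<p. v $ r = 0"
      hence "v = 0\<^sub>v p" using vc by (intro eq_vecI) auto
      thus False using vn by simp
    qed
    thus ?thesis using that by blast
  qed
  have idx: "M*p + r < p*N"
  proof -
    have "M*p + r < M*p + p" using r by simp
    also have "\<dots> = (M+1)*p" by simp
    also have "\<dots> \<le> N*p" using NM assms(2) by (intro mult_right_mono) auto
    finally show ?thesis by (simp add: mult.commute)
  qed
  have xM: "x $ (M*p + r) = v $ r"
    using idx r by (simp add: x_def wv_def M_def)
  have xn: "x \<noteq> 0\<^sub>v (p*N)"
  proof
    assume "x = 0\<^sub>v (p*N)"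
    hence "x $ (M*p + r) = 0" using idx by simp
    thus False using xM r by simp
  qed
  have ev: "?A *\<^sub>v x = lam0 \<cdot>\<^sub>v x"
  proof (rule eq_vecI)
    show "dim_vec (?A *\<^sub>v x) = dim_vec (lam0 \<cdot>\<^sub>v x)" using dimA by (simp add: x_def)
  next
    fix i assume "i < dim_vec (lam0 \<cdot>\<^sub>v x)"
    hence i: "i < p*N" by (simp add: x_def)
    have ib: "i div p < N" using i p0 by (simp add: less_mult_imp_div_less mult.commute)
    have ir: "i mod p < p" using p0 by simp
    have "(?A *\<^sub>v x) $ i = (\<Sum>i'<p*N. ?A $$ (i,i') * x $ i')"
      using i dimA by (simp add: scalar_prod_def x_def lessThan_atLeast0)
    also have "\<dots> = (\<Sum>i'<p*N. CR_block p m n a mj C B (i div p) (i' div p) $$ (i mod p, i' mod p)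
         * ?W (i' div p) (i' mod p))"
      using i by (intro sum.cong) (auto simp: CR_def Let_def N_def x_def)
    also have "\<dots> = (\<Sum>b'<N. \<Sum>c<p. CR_block p m n a mj C B (i div p) b' $$ (i mod p, c) * ?W b' c)"
      by (rule sum_blocks[OF p0])
    also have "\<dots> = lam0 * ?W (i div p) (i mod p)"
    proof (cases "i div p < M")
      case True
      show ?thesis unfolding N_def using rowA[OF True[unfolded M_def] ir L assms(2)] .
    next
      case False
      have h1: "A_blocks n mj \<le> i div p" using False M_def by simp
      have h2: "i div p < N_blocks m n mj" using ib N_def by simp
      show ?thesis unfolding N_def using rowB[OF h1 h2 ir assms(2) Rv vc] .
    qed
    also have "\<dots> = (lam0 \<cdot>\<^sub>v x) $ i" using i by (simp add: x_def)
    finally show "(?A *\<^sub>v x) $ i = (lam0 \<cdot>\<^sub>v x) $ i" .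
  qed
  show ?thesis unfolding eigenvalue_def eigenvector_def
    using xc xn ev dimA by (intro exI[of _ x]) simp
qed

end
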